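(* Let $r\ge 3$ and $k\ge 2r+13$ be integers, and $m=\lfloor (k-1)/2\rfloor$. Let $\mathcal G$ be a nonempty $r$-graph containing no Berge-path of length $k$, in which every vertex has degree at least $\binom{m}{r-1}$. Then there is a longest Berge-path $u_1,f_1,u_2,\dots,f_l,u_{l+1}$ in $\mathcal G$, with set of defining hyperedges $\mathcal F=\{f_1,\dots,f_l\}$, such that $|N_{\mathcal G\setminus\mathcal F}(u_1)|\ge m$ and $|N_{\mathcal G\setminus\mathcal F}(u_{l+1})|\ge m$.
   Context: An $r$-graph is a simple $r$-uniform hypergraph; the degree of a vertex is the number of hyperedges containing it. A Berge-path of length $t$ is an alternating sequence $v_1,e_1,v_2,\dots,e_t,v_{t+1}$ of $t+1$ distinct vertices (the defining vertices) and $t$ distinct hyperedges (the defining hyperedges) with $\{v_i,v_{i+1}\}\subseteq e_i$ for all $i$. For a hypergraph $\mathcal K$ and vertex $v$, $N_{\mathcal K}(v)=\{u\neq v: \exists h\in E(\mathcal K),\ \{u,v\}\subseteq h\}$. $\mathcal G\setminus\mathcal F$ denotes the hypergraph on $V(\mathcal G)$ with hyperedge set $E(\mathcal G)\setminus\mathcal F$. *)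

theory Defs
  imports Main
begin

definition rgraph :: "nat \<Rightarrow> 'a set \<Rightarrow> 'a set set \<Rightarrow> bool" where
  "rgraph r V E \<longleftrightarrow> finite V \<and> (\<forall>e\<in>E. e \<subseteq> V \<and> card e = r)"

definition hdegree :: "'a set set \<Rightarrow> 'a \<Rightarrow> nat" where
  "hdegree E v = card {e \<in> E. v \<in> e}"

text \<open>Berge-path given by defining vertices vs (v_1..v_{t+1}) and defining hyperedges es (e_1..e_t);
  its length is length es.\<close>
definition berge_path :: "'a set set \<Rightarrow> 'a list \<Rightarrow> 'a set list \<Rightarrow> bool" where
  "berge_path E vs es \<longleftrightarrow>
     length vs = length es + 1 \<and> distinct vs \<and> distinct es \<and> set es \<subseteq> E \<and>
     (\<forall>i < length es. {vs ! i, vs ! (i+1)} \<subseteq> es ! i)"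

definition longest_berge_path :: "'a set set \<Rightarrow> 'a list \<Rightarrow> 'a set list \<Rightarrow> bool" where
  "longest_berge_path E vs es \<longleftrightarrow> berge_path E vs es \<and>
     (\<forall>vs' es'. berge_path E vs' es' \<longrightarrow> length es' \<le> length es)"

definition hnbhd :: "'a set \<Rightarrow> 'a set set \<Rightarrow> 'a \<Rightarrow> 'a set" where
  "hnbhd V E v = {u \<in> V. u \<noteq> v \<and> (\<exists>h\<in>E. {u, v} \<subseteq> h)}"

end

theory Submission
  imports Defs
begin

lemma choose_ge_n: "1 \<le> j \<Longrightarrow> j < n \<Longrightarrow> n \<le> n choose j"
proof (induction n arbitrary: j)
  case 0 then show ?case by simp
next
  case (Suc n)
  show ?case
  proof (cases "j = 1")
    case True then show ?thesis by simp
  next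
    case False
    then obtain j' where j: "j = Suc j'" "1 \<le> j'" "j' < n" using Suc.prems
      by (cases j) auto
    have h1: "n \<le> n choose j'" using Suc.IH j by simp
    have h2: "0 < n choose Suc j'" using j Suc.prems by (simp add: zero_less_binomial_iff)
    show ?thesis unfolding j(1) binomial_Suc_Suc using h1 h2 by linarith
  qed
qed

lemma choose_mono_n: "a \<le> b \<Longrightarrow> a choose j \<le> b choose (j::nat)"
proof (induction b)
  case 0 then show ?case by simp
next
  case (Suc b)
  show ?case
  proof (cases "a = Suc b")
    case True then show ?thesis by simp
  next
    case False
    then have "a \<le> b" using Suc.prems by simp
    then have "a choose j \<le> b choose j" using Suc.IH by simp
    also have "\<dots> \<le> Suc b choose j" by (cases j) simp_all
    finally show ?thesis .
  qed
qed

lemma arith_main: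
  fixes r k m :: nat
  assumes "r \<ge> 3" "k \<ge> 2 * r + 13" "m = (k - 1) div 2"
  shows "r * (k - 1) < ((m - 1) choose (r - 2)) * ((m - 1) choose (r - 2))"
proof -
  define c where "c = (m - 1) choose (r - 2)"
  have k1: "k - 1 \<le> 2 * m + 1" using assms by linarith
  have mr: "m \<ge> r + 6" using assms by linarith
  show ?thesis
  proof (cases "r = 3")
    case True
    then have "c = m - 1" unfolding c_def by simp
    moreover have "3 * (2 * m + 1) < (m - 1) * (m - 1)"
    proof -
      obtain a where a: "m = a + 9" using mr True by (intro that[of "m - 9"]) simp
      show ?thesis unfolding a by (simp add: algebra_simps)
    qed
    ultimately show ?thesis using k1 True unfolding c_def[symmetric]
      by (metis le_less_trans mult_le_mono2)
  next
    case False
    then have r4: "r \<ge> 4" using assms by simp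
    obtain a' b' where ab: "m - 1 = Suc a'" "r - 2 = Suc b'" using mr r4
      by (intro that[of "m - 2" "r - 3"]) auto
    have c: "c = (a' choose b') + (a' choose Suc b')" unfolding c_def ab by simp
    have "a' \<le> a' choose b'" by (rule choose_ge_n) (use ab mr r4 in linarith)+
    moreover have "a' \<le> a' choose Suc b'" by (rule choose_ge_n) (use ab mr r4 in linarith)+
    ultimately have cge: "2 * m - 4 \<le> c" using c ab by linarith
    have "r * (k - 1) \<le> (m - 6) * (2 * m + 1)" using k1 mr by (intro mult_mono) auto
    also have "\<dots> < (2 * m - 4) * (2 * m - 4)"
    proof -
      obtain a where a: "m = a + 10" using mr r4 by (intro that[of "m - 10"]) simp
      show ?thesis unfolding a by (simp add: algebra_simps)
    qed
    also have "\<dots> \<le> c * c" using cge by (intro mult_mono) auto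
    finally show ?thesis unfolding c_def .
  qed
qed


lemma bp_prefix:
  assumes "berge_path E vs es" "j \<le> length es"
  shows "berge_path E (take (Suc j) vs) (take j es)"
  using assms unfolding berge_path_def
  by (auto simp: min_def dest: in_set_takeD)

lemma bp_rev:
  assumes "berge_path E vs es"
  shows "berge_path E (rev vs) (rev es)"
proof -
  have L: "length vs = length es + 1" using assms by (simp add: berge_path_def)
  have C: "\<And>i. i < length es \<Longrightarrow> {vs ! i, vs ! (i+1)} \<subseteq> es ! i"
    using assms by (simp add: berge_path_def)
  have "{rev vs ! i, rev vs ! (i+1)} \<subseteq> rev es ! i" if i: "i < length es" for i
  proof -
    have "rev es ! i = es ! (length es - 1 - i)" using i by (simp add: rev_nth)
    moreover have "rev vs ! i = vs ! (length es - 1 - i + 1)" using i L by (simp add: rev_nth Suc_diff_Suc)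
    moreover have "rev vs ! (i+1) = vs ! (length es - 1 - i)" using i L by (simp add: rev_nth)
    ultimately show ?thesis using C[of "length es - 1 - i"] i by auto
  qed
  then show ?thesis using assms by (simp add: berge_path_def)
qed

lemma bp_rotate:
  assumes bp: "berge_path E vs es" and i: "i < length es" and h: "hd vs \<in> es ! i"
  shows "berge_path E (rev (take (Suc i) vs) @ drop (Suc i) vs) (rev (take i es) @ drop i es)"
proof -
  have L: "length vs = length es + 1" using bp by (simp add: berge_path_def)
  have C: "\<And>i. i < length es \<Longrightarrow> {vs ! i, vs ! (i+1)} \<subseteq> es ! i"
    using bp by (simp add: berge_path_def)
  have h0: "vs ! 0 \<in> es ! i" using h L by (simp add: hd_conv_nth[symmetric]) (metis hd_conv_nth list.size(3) Zero_not_Suc add_is_0 one_neq_zero)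
  define vs' where "vs' = rev (take (Suc i) vs) @ drop (Suc i) vs"
  define es' where "es' = rev (take i es) @ drop i es"
  have Lv: "length vs' = length vs" unfolding vs'_def using L i by simp
  have Le: "length es' = length es" unfolding es'_def using i by simp
  have "{vs' ! j, vs' ! (j+1)} \<subseteq> es' ! j" if j: "j < length es" for j
  proof (cases "j < i")
    case True
    have "es' ! j = es ! (i - 1 - j)" unfolding es'_def using True i
      by (simp add: nth_append rev_nth)
    moreover have "vs' ! j = vs ! (i - 1 - j + 1)" unfolding vs'_def using True i L
      by (simp add: nth_append rev_nth Suc_diff_Suc)
    moreover have "vs' ! (j+1) = vs ! (i - 1 - j)" unfolding vs'_def using True i L
      by (simp add: nth_append rev_nth)
    ultimately show ?thesis using C[of "i - 1 - j"] True i by auto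
  next
    case False
    show ?thesis
    proof (cases "j = i")
      case True
      have "es' ! j = es ! i" unfolding es'_def using True i by (simp add: nth_append)
      moreover have "vs' ! j = vs ! 0" unfolding vs'_def using True i L
        by (simp add: nth_append rev_nth)
      moreover have "vs' ! (j+1) = vs ! (i+1)" unfolding vs'_def using True i L
        by (simp add: nth_append)
      ultimately show ?thesis using C[of i] h0 i by auto
    next
      case False2: False
      have "es' ! j = es ! j" unfolding es'_def using False False2 i j by (simp add: nth_append)
      moreover have "vs' ! j = vs ! j" unfolding vs'_def using False False2 i j L
        by (simp add: nth_append)
      moreover have "vs' ! (j+1) = vs ! (j+1)" unfolding vs'_def using False False2 i j L
        by (simp add: nth_append)
      ultimately show ?thesis using C[of j] j by auto
    qed
  qed
  moreover have "distinct vs'" unfolding vs'_def using bp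
    by (simp add: berge_path_def) (metis append_take_drop_id distinct_append set_take_disj_set_drop_if_distinct)
  moreover have "distinct es'" unfolding es'_def using bp
    by (simp add: berge_path_def) (metis append_take_drop_id distinct_append set_take_disj_set_drop_if_distinct)
  moreover have "set es' = set es" unfolding es'_def
    by (metis append_take_drop_id set_append set_rev)
  ultimately show ?thesis using bp Lv Le unfolding vs'_def[symmetric] es'_def[symmetric] berge_path_def
    by auto
qed

lemma rotate_props:
  assumes "length vs = length es + 1" "i < length es"
  shows "hd (rev (take (Suc i) vs) @ drop (Suc i) vs) = vs ! i"
    "last (rev (take (Suc i) vs) @ drop (Suc i) vs) = last vs"
    "set (rev (take i es) @ drop i es) = set es"
    "length (rev (take i es) @ drop i es) = length es"
proof -
  show "hd (rev (take (Suc i) vs) @ drop (Suc i) vs) = vs ! i"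
    using assms by (auto simp add: hd_append hd_rev last_conv_nth)
  show "last (rev (take (Suc i) vs) @ drop (Suc i) vs) = last vs"
    using assms by (simp add: last_append)
  show "set (rev (take i es) @ drop i es) = set es"
    by (metis append_take_drop_id set_append set_rev)
  show "length (rev (take i es) @ drop i es) = length es" using assms by simp
qed


lemma bad_vertex:
  assumes rg: "rgraph r V E" and x: "x \<in> V" and F: "F \<subseteq> E"
    and deg: "hdegree E x \<ge> m choose (r - 1)"
    and small: "card (hnbhd V (E - F) x) < m" and r: "r \<ge> 2"
  shows "(m - 1) choose (r - 2) \<le> card {f \<in> F. x \<in> f}"
proof -
  define N where "N = hnbhd V (E - F) x"
  have fV: "finite V" using rg by (simp add: rgraph_def)
  have EV: "E \<subseteq> Pow V" using rg by (auto simp: rgraph_def)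
  have fE: "finite E" using EV fV by (meson finite_Pow_iff finite_subset)
  have fN: "finite N" unfolding N_def hnbhd_def using fV by simp
  have split: "{e \<in> E. x \<in> e} = {e \<in> F. x \<in> e} \<union> {e \<in> E - F. x \<in> e}" using F by auto
  have "hdegree E x = card {e \<in> F. x \<in> e} + card {e \<in> E - F. x \<in> e}"
    unfolding hdegree_def split by (rule card_Un_disjoint) (use fE F in \<open>auto intro: finite_subset\<close>)
  moreover have "card {e \<in> E - F. x \<in> e} \<le> card {S. S \<subseteq> N \<and> card S = r - 1}"
  proof (rule card_inj_on_le[where f = "\<lambda>e. e - {x}"])
    show "inj_on (\<lambda>e. e - {x}) {e \<in> E - F. x \<in> e}"
      by (rule inj_onI) (metis (no_types, lifting) insert_Diff mem_Collect_eq)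
    show "(\<lambda>e. e - {x}) ` {e \<in> E - F. x \<in> e} \<subseteq> {S. S \<subseteq> N \<and> card S = r - 1}"
    proof
      fix S assume "S \<in> (\<lambda>e. e - {x}) ` {e \<in> E - F. x \<in> e}"
      then obtain e where e: "e \<in> E" "e \<notin> F" "x \<in> e" "S = e - {x}" by auto
      have "e \<subseteq> V" "card e = r" using rg e by (auto simp: rgraph_def)
      then have "S \<subseteq> N" "card S = r - 1" using e unfolding N_def hnbhd_def by auto
      then show "S \<in> {S. S \<subseteq> N \<and> card S = r - 1}" by simp
    qed
    show "finite {S. S \<subseteq> N \<and> card S = r - 1}" using fN by simp
  qed
  moreover have "card {S. S \<subseteq> N \<and> card S = r - 1} = card N choose (r - 1)"
    using fN by (rule n_subsets)
  moreover have "card N choose (r - 1) \<le> (m - 1) choose (r - 1)"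
    using small unfolding N_def by (intro choose_mono_n) simp
  moreover have "m choose (r - 1) = ((m - 1) choose (r - 2)) + ((m - 1) choose (r - 1))"
  proof -
    have m: "m = Suc (m - 1)" using small by simp
    have rr: "r - 1 = Suc (r - 2)" using r by simp
    show ?thesis by (subst m, subst rr, simp only: binomial_Suc_Suc, simp add: rr[symmetric])
  qed
  ultimately show ?thesis using deg by linarith
qed

lemma double_count:
  assumes "finite R" "finite F" "\<forall>f\<in>F. card f = r \<and> finite f"
  shows "(\<Sum>y\<in>R. card {f \<in> F. y \<in> f}) \<le> r * card F"
proof -
  have "(\<Sum>y\<in>R. card {f \<in> F. y \<in> f}) = (\<Sum>y\<in>R. \<Sum>f\<in>F. (of_bool (y \<in> f) :: nat))"
    using assms by (intro sum.cong) (auto simp: Int_def)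
  also have "\<dots> = (\<Sum>f\<in>F. \<Sum>y\<in>R. (of_bool (y \<in> f) :: nat))" by (rule sum.swap)
  also have "\<dots> = (\<Sum>f\<in>F. card (R \<inter> f))" using assms by (intro sum.cong) (auto simp: Int_def)
  also have "\<dots> \<le> (\<Sum>f\<in>F. r)" using assms by (intro sum_mono) (metis card_mono inf_le2)
  also have "\<dots> = r * card F" by simp
  finally show ?thesis .
qed

lemma bp_vertices:
  assumes "berge_path E vs es" "length es \<ge> 1" "rgraph r V E"
  shows "set vs \<subseteq> V"
proof
  fix v assume "v \<in> set vs"
  then obtain i where i: "i < length vs" "v = vs ! i" by (auto simp: in_set_conv_nth)
  have L: "length vs = length es + 1" and C: "\<And>i. i < length es \<Longrightarrow> {vs ! i, vs ! (i+1)} \<subseteq> es ! i"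
    and S: "set es \<subseteq> E" using assms by (auto simp: berge_path_def)
  have EV: "\<And>e. e \<in> E \<Longrightarrow> e \<subseteq> V" using assms by (auto simp: rgraph_def)
  show "v \<in> V"
  proof (cases "i < length es")
    case True
    then have "es ! i \<in> E" using S by auto
    then show ?thesis using C[OF True] EV i by auto
  next
    case False
    then have "i = (length es - 1) + 1" "length es - 1 < length es" using i L assms(2) by auto
    moreover have "es ! (length es - 1) \<in> E" using S assms(2) by auto
    ultimately show ?thesis using C[of "length es - 1"] EV i by (metis insert_subset subsetD)
  qed
qed


lemma one_end:
  assumes rg: "rgraph r V E" and deg: "\<forall>v\<in>V. hdegree E v \<ge> m choose (r - 1)"
    and lp: "longest_berge_path E vs es" and l1: "length es \<ge> 1" and lk: "length es < k"
    and ar: "r * (k - 1) < ((m - 1) choose (r - 2)) * ((m - 1) choose (r - 2))"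
    and r2: "r \<ge> 2"
  shows "\<exists>vs' es'. longest_berge_path E vs' es' \<and> set es' = set es \<and> last vs' = last vs \<and>
           length es' = length es \<and> m \<le> card (hnbhd V (E - set es) (hd vs'))"
proof (cases "m \<le> card (hnbhd V (E - set es) (hd vs))")
  case True then show ?thesis using lp by blast
next
  case bad: False
  define c where "c = (m - 1) choose (r - 2)"
  define F where "F = set es"
  define l where "l = length es"
  have bp: "berge_path E vs es" using lp by (simp add: longest_berge_path_def)
  have L: "length vs = l + 1" and dv: "distinct vs" and de: "distinct es" and FE: "F \<subseteq> E"
    using bp by (auto simp: berge_path_def l_def F_def)
  have sV: "set vs \<subseteq> V" using bp_vertices[OF bp l1 rg] .
  have "vs \<noteq> []" using L by auto
  then have hd0: "hd vs = vs ! 0" by (rule hd_conv_nth)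
  have "hd vs \<in> V" using sV L hd0 by (metis add_gr_0 less_numeral_extra(1) nth_mem subsetD)
  have ROT: "\<exists>vs' es'. longest_berge_path E vs' es' \<and> set es' = F \<and> last vs' = last vs \<and>
           length es' = l \<and> hd vs' = vs ! i" if i: "i < l" "hd vs \<in> es ! i" for i
  proof (intro exI conjI)
    show "longest_berge_path E (rev (take (Suc i) vs) @ drop (Suc i) vs) (rev (take i es) @ drop i es)"
      using bp_rotate[OF bp _ i(2)] i lp rotate_props[OF _ i(1)[unfolded l_def]] L
      unfolding longest_berge_path_def l_def by auto
  qed (use rotate_props[OF _ i(1)[unfolded l_def]] L in \<open>auto simp: l_def F_def\<close>)
  have bad_bound: "c \<le> card {f \<in> F. y \<in> f}"
    if "y \<in> V" "card (hnbhd V (E - F) y) < m" for y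
    unfolding c_def by (rule bad_vertex[OF rg that(1) FE]) (use deg that r2 in auto)
  define I where "I = {i. i < l \<and> hd vs \<in> es ! i}"
  have cI: "card I = card {f \<in> F. hd vs \<in> f}"
  proof -
    have "{f \<in> F. hd vs \<in> f} = (nth es) ` I" unfolding I_def F_def l_def
      by (auto simp: in_set_conv_nth)
    moreover have "inj_on (nth es) I" unfolding I_def l_def using de
      by (auto simp: inj_on_def nth_eq_iff_index_eq)
    ultimately show ?thesis by (simp add: card_image)
  qed
  have cI2: "c \<le> card I" using cI bad_bound[OF \<open>hd vs \<in> V\<close>] bad unfolding F_def by simp
  define R where "R = (nth vs) ` I"
  have cR: "card R = card I" unfolding R_def
    by (rule card_image) (use dv L in \<open>auto simp: I_def inj_on_def nth_eq_iff_index_eq\<close>)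
  show ?thesis
  proof (cases "\<exists>i\<in>I. m \<le> card (hnbhd V (E - F) (vs ! i))")
    case True
    then obtain i where "i \<in> I" "m \<le> card (hnbhd V (E - F) (vs ! i))" by blast
    then show ?thesis using ROT[of i] unfolding I_def F_def l_def by force
  next
    case False
    have fI: "finite I" unfolding I_def by simp
    have RV: "R \<subseteq> V" unfolding R_def I_def using sV L by auto
    have each: "\<forall>y\<in>R. c \<le> card {f \<in> F. y \<in> f}"
      using False RV bad_bound unfolding R_def by (auto simp: not_le)
    have "c * card R \<le> (\<Sum>y\<in>R. card {f \<in> F. y \<in> f})"
      using each sum_mono[of R "\<lambda>_. c"] by (simp add: mult.commute)
    also have "\<dots> \<le> r * card F"
    proof (rule double_count)
      show "finite R" unfolding R_def using fI by simp
      show "finite F" unfolding F_def by simp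
      show "\<forall>f\<in>F. card f = r \<and> finite f"
      proof
        fix f assume "f \<in> F"
        then have "f \<in> E" using FE by auto
        then have "card f = r" using rg by (simp add: rgraph_def)
        then show "card f = r \<and> finite f" using r2 by (metis card.infinite not_numeral_le_zero)
      qed
    qed
    also have "\<dots> = r * l" unfolding F_def l_def using de by (simp add: distinct_card)
    also have "\<dots> \<le> r * (k - 1)" using lk unfolding l_def by (intro mult_le_mono2) linarith
    finally have "c * card R \<le> r * (k - 1)" .
    moreover have "c * c \<le> c * card R" using cR cI2 by simp
    ultimately show ?thesis using ar unfolding c_def by linarith
  qed
qed


theorem claim1:
  fixes r k m :: nat and V :: "'a set" and E :: "'a set set"
  assumes "r \<ge> 3" and "k \<ge> 2 * r + 13" and "m = (k - 1) div 2"
    and "rgraph r V E" and "V \<noteq> {}"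
    and "\<not> (\<exists>vs es. berge_path E vs es \<and> length es = k)"
    and "\<forall>v\<in>V. hdegree E v \<ge> m choose (r - 1)"
  shows "\<exists>vs es. longest_berge_path E vs es \<and>
           card (hnbhd V (E - set es) (hd vs)) \<ge> m \<and>
           card (hnbhd V (E - set es) (last vs)) \<ge> m"
proof -
  note rg = assms(4) and deg = assms(7)
  have ar: "r * (k - 1) < ((m - 1) choose (r - 2)) * ((m - 1) choose (r - 2))"
    using arith_main[OF assms(1-3)] .
  have r2: "r \<ge> 2" using assms(1) by simp
  have bound: "length es < k" if "berge_path E vs es" for vs es
  proof (rule ccontr)
    assume "\<not> length es < k"
    then have "berge_path E (take (Suc k) vs) (take k es)" "length (take k es) = k"
      using bp_prefix[OF that, of k] by auto
    then show False using assms(6) by blast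
  qed
  obtain v where v: "v \<in> V" using assms(5) by blast
  have "0 < m choose (r - 1)" using assms(1-3) by (simp add: zero_less_binomial_iff)
  then have "hdegree E v > 0" using deg v by (meson less_le_trans)
  then obtain e where e: "e \<in> E" "v \<in> e" unfolding hdegree_def
    by (metis (no_types, lifting) card_gt_0_iff empty_Collect_eq)
  have "card e = r" using rg e by (simp add: rgraph_def)
  then have "card (e - {v}) > 0" using e assms(1) by simp
  then have "e - {v} \<noteq> {}" by (simp only: card_gt_0_iff) blast
  then obtain w where w: "w \<in> e" "w \<noteq> v" by blast
  have bp1: "berge_path E [v, w] [e]" using e w by (auto simp: berge_path_def less_Suc_eq)
  define P where "P = (\<lambda>n. \<exists>vs es. berge_path E vs es \<and> length es = n)"
  have "P 1" unfolding P_def using bp1 by (intro exI[of _ "[v,w]"] exI[of _ "[e]"]) simp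
  moreover have "\<forall>y. P y \<longrightarrow> y \<le> k" unfolding P_def using bound by (auto intro: less_imp_le)
  ultimately obtain n where n: "P n" "\<forall>y. P y \<longrightarrow> y \<le> n"
    using Nat.ex_has_greatest_nat[of P 1 k] by blast
  then obtain vs0 es0 where p0: "berge_path E vs0 es0" "length es0 = n" unfolding P_def by blast
  have lp0: "longest_berge_path E vs0 es0" unfolding longest_berge_path_def
  proof (intro conjI allI impI)
    fix vs' es' assume "berge_path E vs' es'"
    then have "P (length es')" unfolding P_def by blast
    then show "length es' \<le> length es0" using n(2) p0(2) by simp
  qed (rule p0(1))
  have n1: "n \<ge> 1" using n(2) \<open>P 1\<close> by simp
  obtain vs1 es1 where p1: "longest_berge_path E vs1 es1" "set es1 = set es0" "last vs1 = last vs0"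
    "length es1 = length es0" "m \<le> card (hnbhd V (E - set es0) (hd vs1))"
    using one_end[OF rg deg lp0 _ bound ar r2] p0 n1 by blast
  have bp1r: "berge_path E (rev vs1) (rev es1)" using p1(1) bp_rev by (auto simp: longest_berge_path_def)
  have lp1r: "longest_berge_path E (rev vs1) (rev es1)"
    using bp1r p1(1) by (auto simp: longest_berge_path_def)
  obtain vs2 es2 where p2: "longest_berge_path E vs2 es2" "set es2 = set (rev es1)"
    "last vs2 = last (rev vs1)" "length es2 = length (rev es1)"
    "m \<le> card (hnbhd V (E - set (rev es1)) (hd vs2))"
    using one_end[OF rg deg lp1r _ bound[OF bp1r] ar r2] p1(4) p0 n1 by auto
  have "vs1 \<noteq> []" using p1(1) by (auto simp: longest_berge_path_def berge_path_def)
  then have "last (rev vs1) = hd vs1" by (simp add: last_rev)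
  then show ?thesis using p1 p2 by (intro exI[of _ vs2] exI[of _ es2]) auto
qed

end
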